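(* Suppose $\|f\|_\infty\le C$ for some $C\ge1$ and there are $\sigma,\Gamma>0$ with $\mathbb{E}[|\varepsilon|^k\mid\mathbf{X}]\le\frac{k!}{2}\sigma^2\Gamma^{k-2}$ a.s. for all integers $k\ge2$. Let $w=16C(\Gamma\vee 2C)$ and $C_{n,\lambda}=\frac{\lambda}{n}\frac{8(C^2+\sigma^2)}{1-w\lambda/n}$. Then for every parameter $\theta\in\mathbb{R}^P$ and every $\lambda\in[0,n/w)$, \[ \max\Big\{\mathbb{E}\big[e^{\lambda(\mathcal{E}(\theta)-\mathcal{E}_n(\theta))}\big],\ \mathbb{E}\big[e^{\lambda(\mathcal{E}_n(\theta)-\mathcal{E}(\theta))}\big]\Big\}\le \exp\big(C_{n,\lambda}\lambda\mathcal{E}(\theta)\big). \]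
   Context: Data: $(\mathbf{X}_i,Y_i)_{i=1,\dots,n}$ i.i.d. copies of $(\mathbf{X},Y)\in\mathbb{R}^p\times\mathbb{R}$, $Y=f(\mathbf{X})+\varepsilon$, $\mathbb{E}[\varepsilon\mid\mathbf{X}]=0$ a.s. $R(g)=\mathbb{E}[(Y-g(\mathbf{X}))^2]$, $R_n(g)=\frac1n\sum_i(Y_i-g(\mathbf{X}_i))^2$. Networks: ReLU $\sigma(x)=\max(x,0)$; $g_\theta(\mathbf{x})=W^{(L+1)}\mathbf{x}^{(L)}+v^{(L+1)}$, $\mathbf{x}^{(0)}=\mathbf{x}\in\mathbb{R}^p$, $\mathbf{x}^{(l)}=\sigma(W^{(l)}\mathbf{x}^{(l-1)}+v^{(l)})$, $l=1,\dots,L$, width $r$, parameters $\theta\in\mathbb{R}^P$; clipped network $f_\theta=(-C)\vee(g_\theta\wedge C)$. $\mathcal{E}(\theta)=R(f_\theta)-R(f)$ and $\mathcal{E}_n(\theta)=R_n(f_\theta)-R_n(f)$. *)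

theory Defs
  imports "HOL-Probability.Probability"
begin

definition relu :: "real \<Rightarrow> real" where
  "relu t = max t 0"

text \<open>Hidden layers of a ReLU network of width r with input in real^'p.
  Parameters: W1 i j = entry (i,j) of W^(1); W l i j = entry (i,j) of W^(l) for l \<ge> 2;
  v l i = i-th entry of the bias v^(l). Layer l output is x^(l) (entries i < r relevant).\<close>
fun relu_hidden :: "(nat \<Rightarrow> 'p::finite \<Rightarrow> real) \<Rightarrow> (nat \<Rightarrow> nat \<Rightarrow> nat \<Rightarrow> real) \<Rightarrow>
    (nat \<Rightarrow> nat \<Rightarrow> real) \<Rightarrow> nat \<Rightarrow> nat \<Rightarrow> real^'p \<Rightarrow> nat \<Rightarrow> real" where
  "relu_hidden W1 W v r 0 x = (\<lambda>i. 0)"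
| "relu_hidden W1 W v r (Suc 0) x =
     (\<lambda>i. relu ((\<Sum>j\<in>UNIV. W1 i j * x $ j) + v 1 i))"
| "relu_hidden W1 W v r (Suc (Suc l)) x =
     (\<lambda>i. relu ((\<Sum>j<r. W (Suc (Suc l)) i j * relu_hidden W1 W v r (Suc l) x j)
                  + v (Suc (Suc l)) i))"

definition relu_net :: "nat \<Rightarrow> nat \<Rightarrow> (nat \<Rightarrow> 'p::finite \<Rightarrow> real) \<Rightarrow> (nat \<Rightarrow> nat \<Rightarrow> nat \<Rightarrow> real) \<Rightarrow>
    (nat \<Rightarrow> nat \<Rightarrow> real) \<Rightarrow> real^'p \<Rightarrow> real" where
  "relu_net L r W1 W v x =
     (if L = 0 then (\<Sum>j\<in>UNIV. W1 0 j * x $ j) + v 1 0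
      else (\<Sum>j<r. W (Suc L) 0 j * relu_hidden W1 W v r L x j) + v (Suc L) 0)"

definition clip :: "real \<Rightarrow> real \<Rightarrow> real" where
  "clip C t = max (- C) (min t C)"

definition clipped_net where
  "clipped_net C L r W1 W v x = clip C (relu_net L r W1 W v x)"

definition risk :: "'a measure \<Rightarrow> ('a \<Rightarrow> 'b) \<Rightarrow> ('a \<Rightarrow> real) \<Rightarrow> ('b \<Rightarrow> real) \<Rightarrow> real" where
  "risk M X Y g = (\<integral>\<omega>. (Y \<omega> - g (X \<omega>))^2 \<partial>M)"

definition emp_risk :: "nat \<Rightarrow> (nat \<Rightarrow> 'a \<Rightarrow> 'b) \<Rightarrow> (nat \<Rightarrow> 'a \<Rightarrow> real) \<Rightarrow> ('b \<Rightarrow> real) \<Rightarrow> 'a \<Rightarrow> real" where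
  "emp_risk n Xs Ys g \<omega> = (1 / real n) * (\<Sum>i<n. (Ys i \<omega> - g (Xs i \<omega>))^2)"

end

theory Submission
  imports Defs
begin

lemma relu_hidden_meas: "(\<lambda>x. relu_hidden W1 W v r l x i) \<in> borel_measurable borel"
proof (induction l arbitrary: i)
  case 0 then show ?case by simp
next
  case (Suc l)
  show ?case
  proof (cases l)
    case 0
    then show ?thesis by (simp add: relu_def; measurable)
  next
    case (Suc l')
    then show ?thesis using Suc.IH by (simp add: relu_def; measurable)
  qed
qed

lemma clipped_meas: "clipped_net C L r W1 W v \<in> borel_measurable borel"
  unfolding clipped_net_def clip_def relu_net_def
  using relu_hidden_meas by measurable

lemma clipped_bdd: "C \<ge> 0 \<Longrightarrow> \<bar>clipped_net C L r W1 W v x\<bar> \<le> C"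
  unfolding clipped_net_def clip_def by auto

lemma pow_add_le:
  fixes a b :: real assumes "0 \<le> a" "0 \<le> b"
  shows "(a+b)^(Suc k) \<le> 2^k * (a^(Suc k) + b^(Suc k))"
proof (induction k)
  case 0 then show ?case by simp
next
  case (Suc k)
  have key: "(a+b)*(a^(Suc k) + b^(Suc k)) \<le> 2*(a^(Suc (Suc k)) + b^(Suc (Suc k)))"
  proof -
    have "0 \<le> (a-b)*(a^(Suc k) - b^(Suc k))"
    proof (cases "a \<le> b")
      case True
      then have "a^(Suc k) \<le> b^(Suc k)" using assms by (intro power_mono) auto
      then show ?thesis using True by (intro mult_nonpos_nonpos) auto
    next
      case False
      then have "b^(Suc k) \<le> a^(Suc k)" using assms by (intro power_mono) auto
      then show ?thesis using False by auto
    qed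
    then show ?thesis by (simp add: algebra_simps)
  qed
  have "(a+b)^(Suc (Suc k)) = (a+b) * (a+b)^(Suc k)" by simp
  also have "\<dots> \<le> (a+b) * (2^k * (a^(Suc k) + b^(Suc k)))"
    using Suc assms by (intro mult_left_mono) auto
  also have "\<dots> = 2^k * ((a+b)*(a^(Suc k) + b^(Suc k)))" by simp
  also have "\<dots> \<le> 2^k * (2*(a^(Suc (Suc k)) + b^(Suc (Suc k))))"
    using key by (intro mult_left_mono) auto
  finally show ?case by (simp add: field_simps)
qed

lemma exp_le_series:
  fixes x :: real
  shows "summable (\<lambda>j. \<bar>x\<bar>^(j+2)/fact(j+2))"
    and "exp x \<le> 1 + x + (\<Sum>j. \<bar>x\<bar>^(j+2)/fact(j+2))"
proof -
  have s1: "summable (\<lambda>n. \<bar>x\<bar>^n/fact n)"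
    using exp_converges[of "\<bar>x\<bar>"] by (simp add: sums_iff divide_inverse mult.commute scaleR_conv_of_real)
  show s2: "summable (\<lambda>j. \<bar>x\<bar>^(j+2)/fact(j+2))"
    using summable_ignore_initial_segment[OF s1, of 2] by simp
  have s3: "summable (\<lambda>n. x^n/fact n)"
    using exp_converges[of x] by (simp add: sums_iff divide_inverse mult.commute scaleR_conv_of_real)
  have s4: "summable (\<lambda>j. x^(j+2)/fact(j+2))"
    using summable_ignore_initial_segment[OF s3, of 2] by simp
  have "exp x = (\<Sum>n. x^n/fact n)"
    using exp_converges[of x] by (simp add: sums_iff divide_inverse mult.commute scaleR_conv_of_real)
  also have "\<dots> = (\<Sum>j. x^(j+2)/fact(j+2)) + (\<Sum>n<2. x^n/fact n)"
    using suminf_split_initial_segment[OF s3, of 2] by simp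
  also have "(\<Sum>n<2. x^n/fact n) = 1 + x" by (simp add: numeral_2_eq_2)
  also have "(\<Sum>j. x^(j+2)/fact(j+2)) \<le> (\<Sum>j. \<bar>x\<bar>^(j+2)/fact(j+2))"
    apply (rule suminf_le[OF _ s4 s2])
    apply (intro divide_right_mono)
    apply (metis abs_ge_self power_abs)
    by simp
  finally show "exp x \<le> 1 + x + (\<Sum>j. \<bar>x\<bar>^(j+2)/fact(j+2))" by simp
qed

lemma moment_consts:
  fixes C \<sigma> \<Gamma> :: real
  assumes "C \<ge> 1" "\<Gamma> > 0"
  shows "2^(j+1)*(2*C)^(2*j+2) + 2^(2*j+3)*(2*C)^j*(fact(j+2)/2*\<sigma>^2*\<Gamma>^j)
     \<le> 8*fact(j+2)*(C^2+\<sigma>^2)*(16*C*max \<Gamma> (2*C))^j"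
proof -
  define w where "w = 16*C*max \<Gamma> (2*C)"
  have w1: "8*C^2 \<le> w" unfolding w_def using assms by (auto simp: power2_eq_square max_def)
  have w2: "8*C*\<Gamma> \<le> w" unfolding w_def using assms by (auto simp: max_def)
  have w0: "0 \<le> w" using w1 by (smt (verit) zero_le_power2)
  have f1: "(1::real) \<le> fact (j+2)" by (rule fact_ge_1)
  have p8: "(8::real)^j = 2^j*(2^j*2^j)"
    using power_mult_distrib[of "2::real" "2*2" j] power_mult_distrib[of "2::real" 2 j] by simp
  have e1: "2^(j+1)*(2*C)^(2*j+2) = 8*C^2*(8*C^2)^j"
    by (simp add: power_add power_mult power_mult_distrib mult_ac power2_eq_square p8)
  have e2': "2^(2*j+3)*(2*C)^j*(F/2*\<sigma>^2*\<Gamma>^j) = 4*F*\<sigma>^2*(8*C*\<Gamma>)^j" for F :: real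
    by (simp add: power_add power_mult power_mult_distrib mult_ac p8 power2_eq_square)
  note e2 = e2'[of "fact(j+2)"]
  have "8*C^2*(8*C^2)^j \<le> 8*C^2*w^j"
    using w1 by (intro mult_left_mono power_mono) auto
  also have "\<dots> \<le> 8*fact(j+2)*C^2*w^j"
    using f1 w0 assms by (intro mult_right_mono) (auto intro!: zero_le_power)
  finally have i1: "8*C^2*(8*C^2)^j \<le> 8*fact(j+2)*C^2*w^j" .
  have "4*fact(j+2)*\<sigma>^2*(8*C*\<Gamma>)^j \<le> 4*fact(j+2)*\<sigma>^2*w^j"
    using w2 assms by (intro mult_left_mono power_mono) auto
  also have "\<dots> \<le> 8*fact(j+2)*\<sigma>^2*w^j"
    using w0 assms by (intro mult_right_mono) (auto intro!: zero_le_power)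
  finally have i2: "4*fact(j+2)*\<sigma>^2*(8*C*\<Gamma>)^j \<le> 8*fact(j+2)*\<sigma>^2*w^j" .
  show ?thesis unfolding e1 e2 using i1 i2 unfolding w_def[symmetric] by (simp add: algebra_simps)
qed

lemma Z_pow_bound:
  fixes a b C :: real assumes A: "\<bar>a\<bar> \<le> 2*C"
  shows "\<bar>a^2 + 2*b*a\<bar>^(j+2) \<le> 2^(j+1)*(2*C)^(2*j+2)*a^2 + 2^(2*j+3)*(2*C)^j*(a^2*\<bar>b\<bar>^(j+2))"
proof -
  have "\<bar>a^2 + 2*b*a\<bar> = \<bar>a\<bar> * \<bar>a + 2*b\<bar>" by (simp add: power2_eq_square abs_mult[symmetric] algebra_simps)
  also have "\<dots> \<le> \<bar>a\<bar> * (\<bar>a\<bar> + 2*\<bar>b\<bar>)" by (intro mult_left_mono) auto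
  finally have "\<bar>a^2 + 2*b*a\<bar>^(j+2) \<le> (\<bar>a\<bar> * (\<bar>a\<bar> + 2*\<bar>b\<bar>))^(j+2)" by (intro power_mono) auto
  also have "\<dots> = \<bar>a\<bar>^(j+2) * (\<bar>a\<bar> + 2*\<bar>b\<bar>)^(Suc (j+1))" by (simp add: power_mult_distrib)
  also have "\<dots> \<le> \<bar>a\<bar>^(j+2) * (2^(j+1) * (\<bar>a\<bar>^(Suc (j+1)) + (2*\<bar>b\<bar>)^(Suc (j+1))))"
    by (intro mult_left_mono pow_add_le) auto
  also have "\<bar>a\<bar>^(j+2) * (2^(j+1) * (\<bar>a\<bar>^(Suc (j+1)) + (2*\<bar>b\<bar>)^(Suc (j+1)))) = 2^(j+1) * (\<bar>a\<bar>^(j+2)*\<bar>a\<bar>^(j+2)) + 2^(2*j+3) * (\<bar>a\<bar>^(j+2)*\<bar>b\<bar>^(j+2))"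
  proof -
    have h1: "(2*\<bar>b\<bar>)^(Suc (j+1)) = 2^(j+2)*\<bar>b\<bar>^(j+2)" by (simp only: power_mult_distrib Suc_eq_plus1 add.assoc one_add_one)
    have e: "2*j+3 = (j+1)+(j+2)" by simp
    have h2: "(2::real)^(2*j+3) = 2^(j+1)*2^(j+2)" unfolding e by (rule power_add)
    show ?thesis unfolding h1 h2 Suc_eq_plus1 add.assoc one_add_one by (simp only: ring_distribs mult_ac power_mult_distrib)
  qed
  also have "\<bar>a\<bar>^(j+2)*\<bar>a\<bar>^(j+2) = a^2 * \<bar>a\<bar>^(2*j+2)"
  proof -
    have ex: "(j+2)+(j+2) = 2+(2*j+2)" by simp
    show ?thesis by (metis ex power_add power2_abs)
  qed
  also have "\<bar>a\<bar>^(j+2) = a^2 * \<bar>a\<bar>^j"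
    by (metis power_add power2_abs mult.commute)
  also have "2^(j+1) * (a^2 * \<bar>a\<bar>^(2*j+2)) + 2^(2*j+3) * (a^2 * \<bar>a\<bar>^j*\<bar>b\<bar>^(j+2))
      \<le> 2^(j+1) * (a^2 * (2*C)^(2*j+2)) + 2^(2*j+3) * (a^2 * (2*C)^j*\<bar>b\<bar>^(j+2))"
    using A by (intro add_mono mult_left_mono mult_right_mono power_mono) auto
  finally show ?thesis by (simp add: mult_ac)
qed

theorem lemma4p2:
  fixes M :: "'a measure"
    and X :: "'a \<Rightarrow> real^'p::finite" and Y :: "'a \<Rightarrow> real"
    and Xs :: "nat \<Rightarrow> 'a \<Rightarrow> real^'p" and Ys :: "nat \<Rightarrow> 'a \<Rightarrow> real"
    and f :: "real^'p \<Rightarrow> real"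
    and n L r :: nat and C \<sigma> \<Gamma> lam :: real
    and W1 :: "nat \<Rightarrow> 'p \<Rightarrow> real" and W :: "nat \<Rightarrow> nat \<Rightarrow> nat \<Rightarrow> real"
    and v :: "nat \<Rightarrow> nat \<Rightarrow> real"
  assumes M: "prob_space M"
    and XY_rv: "X \<in> borel_measurable M" "Y \<in> borel_measurable M"
    and iid_indep: "prob_space.indep_vars M (\<lambda>_. borel) (\<lambda>i \<omega>. (Xs i \<omega>, Ys i \<omega>)) {..<n}"
    and iid_dist: "\<And>i. i < n \<Longrightarrow>
         distr M borel (\<lambda>\<omega>. (Xs i \<omega>, Ys i \<omega>)) = distr M borel (\<lambda>\<omega>. (X \<omega>, Y \<omega>))"
    and f_meas: "f \<in> borel_measurable borel"
    and noise_int: "integrable M (\<lambda>\<omega>. Y \<omega> - f (X \<omega>))"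
    and noise_mean: "AE \<omega> in M.
         real_cond_exp M (vimage_algebra (space M) X borel) (\<lambda>\<omega>. Y \<omega> - f (X \<omega>)) \<omega> = 0"
    and C_ge: "C \<ge> 1"
    and f_bdd: "\<forall>x. \<bar>f x\<bar> \<le> C"
    and \<sigma>_pos: "\<sigma> > 0" and \<Gamma>_pos: "\<Gamma> > 0"
    and moments: "\<And>k::nat. k \<ge> 2 \<Longrightarrow> AE \<omega> in M.
         nn_cond_exp M (vimage_algebra (space M) X borel)
           (\<lambda>\<omega>. ennreal (\<bar>Y \<omega> - f (X \<omega>)\<bar> ^ k)) \<omega>
         \<le> ennreal (fact k / 2 * \<sigma>^2 * \<Gamma>^(k - 2))"
    and lam: "0 \<le> lam" "lam < real n / (16 * C * max \<Gamma> (2 * C))"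
  shows
    "let w = 16 * C * max \<Gamma> (2 * C);
         Cnl = lam / real n * (8 * (C^2 + \<sigma>^2) / (1 - w * lam / real n));
         ft = clipped_net C L r W1 W v;
         E = risk M X Y ft - risk M X Y f;
         En = (\<lambda>\<omega>. emp_risk n Xs Ys ft \<omega> - emp_risk n Xs Ys f \<omega>)
     in max (\<integral>\<^sup>+ \<omega>. ennreal (exp (lam * (E - En \<omega>))) \<partial>M)
            (\<integral>\<^sup>+ \<omega>. ennreal (exp (lam * (En \<omega> - E))) \<partial>M)
        \<le> ennreal (exp (Cnl * lam * E))"
proof -
  interpret P: prob_space M by (rule M)
  define w where "w = 16 * C * max \<Gamma> (2 * C)"
  define K where "K = 8 * (C^2 + \<sigma>^2)"
  define ft where "ft = clipped_net C L r W1 W v"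
  define g where "g x = f x - ft x" for x
  define eps where "eps \<omega> = Y \<omega> - f (X \<omega>)" for \<omega>
  define phi where "phi p = (snd p - ft (fst p))^2 - (snd p - f (fst p))^2" for p :: "(real^'p) \<times> real"
  define F where "F = vimage_algebra (space M) X borel"
  define e where "e = (\<integral>\<omega>. (g (X \<omega>))^2 \<partial>M)"
  have w_pos: "w > 0" unfolding w_def using C_ge \<Gamma>_pos by auto
  have n_pos: "n > 0"
  proof (rule ccontr)
    assume "\<not> n > 0" then have "n = 0" by simp
    then show False using lam w_pos unfolding w_def by simp
  qed
  have lamw: "lam / real n * w < 1"
    using lam(2) w_pos n_pos unfolding w_def[symmetric] by (simp add: field_simps)
  have ft_meas[measurable]: "ft \<in> borel_measurable borel" unfolding ft_def by (rule clipped_meas)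
  have ft_bdd: "\<bar>ft x\<bar> \<le> C" for x unfolding ft_def using C_ge by (intro clipped_bdd) auto
  note [measurable] = XY_rv f_meas
  have g_meas[measurable]: "g \<in> borel_measurable borel" unfolding g_def by measurable
  have g_bdd: "\<bar>g x\<bar> \<le> 2*C" for x unfolding g_def using ft_bdd[of x] f_bdd by (smt (verit))
  have eps_meas[measurable]: "eps \<in> borel_measurable M" unfolding eps_def by measurable
  have phi_eq: "phi (x, y) = (g x)^2 + 2*(y - f x)*(g x)" for x y
    unfolding phi_def g_def by (simp add: power2_eq_square algebra_simps)
  have phi_meas[measurable]: "phi \<in> borel_measurable borel" unfolding phi_def by (subst borel_prod[symmetric]) measurable
  have subalg: "subalgebra M F"
    unfolding subalgebra_def F_def
  proof (intro conjI)
    show "space (vimage_algebra (space M) X borel) = space M" by simp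
    show "sets (vimage_algebra (space M) X borel) \<subseteq> sets M"
      using sets_vimage_algebra2[of X "space M" borel] measurable_sets[OF XY_rv(1)] by auto
  qed
  interpret S: finite_measure_subalgebra M F
    by (intro finite_measure_subalgebra.intro finite_measure_subalgebra_axioms.intro subalg) unfold_locales
  have XF: "(\<lambda>\<omega>. h (X \<omega>)) \<in> borel_measurable F" if "h \<in> borel_measurable borel" for h :: "real^'p \<Rightarrow> real"
    unfolding F_def using measurable_compose[OF measurable_vimage_algebra1[of X "space M" borel] that] by simp
  have g2_int: "integrable M (\<lambda>\<omega>. (g (X \<omega>))^2)"
  proof (rule P.integrable_const_bound[where B="(2*C)^2"])
    show "AE x in M. norm ((g (X x))^2) \<le> (2*C)^2"
    proof (intro AE_I2)
      fix x show "norm ((g (X x))^2) \<le> (2*C)^2"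
        using power_mono[OF g_bdd abs_ge_zero, of "X x" 2] by simp
    qed
  qed measurable
  have e_nonneg: "e \<ge> 0" unfolding e_def by simp
  have mom: "AE \<omega> in M. nn_cond_exp M F (\<lambda>\<omega>. ennreal (\<bar>eps \<omega>\<bar> ^ k)) \<omega> \<le> ennreal (fact k / 2 * \<sigma>^2 * \<Gamma>^(k - 2))"
    if "k \<ge> 2" for k
    using moments[OF that] unfolding F_def eps_def by simp
  have eps_int: "integrable M eps" using noise_int unfolding eps_def by simp
  have eps2_int: "integrable M (\<lambda>\<omega>. (eps \<omega>)^2)"
  proof (rule integrableI_nonneg)
    have "(\<integral>\<^sup>+\<omega>. ennreal ((eps \<omega>)^2) \<partial>M) = (\<integral>\<^sup>+\<omega>. 1 * ennreal (\<bar>eps \<omega>\<bar>^2) \<partial>M)" by simp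
    also have "\<dots> = (\<integral>\<^sup>+\<omega>. 1 * nn_cond_exp M F (\<lambda>\<omega>. ennreal (\<bar>eps \<omega>\<bar> ^ 2)) \<omega> \<partial>M)"
      by (rule S.nn_cond_exp_intg[symmetric]) auto
    also have "\<dots> \<le> (\<integral>\<^sup>+\<omega>. ennreal (fact 2 / 2 * \<sigma>^2 * \<Gamma>^(2 - 2)) \<partial>M)"
      using mom[of 2] by (intro nn_integral_mono_AE) auto
    also have "\<dots> < \<infinity>" by (simp add: P.emeasure_space_1)
    finally show "(\<integral>\<^sup>+\<omega>. ennreal ((eps \<omega>)^2) \<partial>M) < \<infinity>" .
  qed auto
  have geps_int: "integrable M (\<lambda>\<omega>. g (X \<omega>) * eps \<omega>)"
  proof (rule Bochner_Integration.integrable_bound[where f="\<lambda>\<omega>. 2*C*eps \<omega>"])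
    show "integrable M (\<lambda>\<omega>. 2*C*eps \<omega>)" using eps_int by simp
    show "AE \<omega> in M. norm (g (X \<omega>) * eps \<omega>) \<le> norm (2*C*eps \<omega>)"
      using g_bdd C_ge by (auto simp: abs_mult intro!: mult_right_mono)
  qed measurable
  have geps0: "(\<integral>\<omega>. g (X \<omega>) * eps \<omega> \<partial>M) = 0"
  proof -
    have "(\<integral>\<omega>. g (X \<omega>) * eps \<omega> \<partial>M) = (\<integral>\<omega>. g (X \<omega>) * real_cond_exp M F eps \<omega> \<partial>M)"
      by (rule S.real_cond_exp_intg(2)[symmetric]) (use geps_int XF[OF g_meas] in auto)
    also have "\<dots> = (\<integral>\<omega>. 0 \<partial>M)"
      using noise_mean unfolding F_def[symmetric] eps_def[symmetric] by (intro integral_cong_AE) auto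
    finally show ?thesis by simp
  qed
  have Z_eq: "phi (X \<omega>, Y \<omega>) = (g (X \<omega>))^2 + 2 * (g (X \<omega>) * eps \<omega>)" for \<omega>
    unfolding phi_eq eps_def by simp
  have Z_int: "integrable M (\<lambda>\<omega>. phi (X \<omega>, Y \<omega>))"
    unfolding Z_eq using g2_int geps_int by auto
  have Z_mean: "(\<integral>\<omega>. phi (X \<omega>, Y \<omega>) \<partial>M) = e"
    unfolding Z_eq using g2_int geps_int geps0 by (simp add: e_def)
  have E_eq: "risk M X Y ft - risk M X Y f = e"
  proof -
    have a: "(Y \<omega> - ft (X \<omega>))^2 = (eps \<omega>)^2 + phi (X \<omega>, Y \<omega>)" for \<omega>
      unfolding phi_def eps_def by simp
    have "risk M X Y ft = (\<integral>\<omega>. (eps \<omega>)^2 + phi (X \<omega>, Y \<omega>) \<partial>M)"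
      unfolding risk_def a ..
    also have "\<dots> = (\<integral>\<omega>. (eps \<omega>)^2 \<partial>M) + e"
      using eps2_int Z_int Z_mean by simp
    also have "(\<integral>\<omega>. (eps \<omega>)^2 \<partial>M) = risk M X Y f"
      unfolding risk_def eps_def ..
    finally show ?thesis by simp
  qed
  have Z_mom: "(\<integral>\<^sup>+\<omega>. ennreal (\<bar>phi (X \<omega>, Y \<omega>)\<bar>^(j+2)) \<partial>M) \<le> ennreal (e * (fact(j+2) * K * w^j))" for j
  proof -
    define A where "A = (2::real)^(j+1)*(2*C)^(2*j+2)"
    define B where "B = (2::real)^(2*j+3)*(2*C)^j"
    define Mk where "Mk = fact(j+2)/2*\<sigma>^2*\<Gamma>^j"
    have A0: "A \<ge> 0" unfolding A_def using C_ge by simp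
    have B0: "B \<ge> 0" unfolding B_def using C_ge by simp
    have Mk0: "Mk \<ge> 0" unfolding Mk_def using \<Gamma>_pos by simp
    have gX2F[measurable]: "(\<lambda>\<omega>. (g (X \<omega>))^2) \<in> borel_measurable F"
      by (rule XF) measurable
    have pw: "ennreal (\<bar>phi (X \<omega>, Y \<omega>)\<bar>^(j+2)) \<le> ennreal (A*(g (X \<omega>))^2) + ennreal (B*((g (X \<omega>))^2*\<bar>eps \<omega>\<bar>^(j+2)))" for \<omega>
    proof -
      have z: "phi (X \<omega>, Y \<omega>) = (g (X \<omega>))^2 + 2*eps \<omega>*g (X \<omega>)" by (simp add: Z_eq mult_ac)
      have "\<bar>phi (X \<omega>, Y \<omega>)\<bar>^(j+2) \<le> A*(g (X \<omega>))^2 + B*((g (X \<omega>))^2*\<bar>eps \<omega>\<bar>^(j+2))"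
        unfolding z A_def B_def by (rule Z_pow_bound[OF g_bdd])
      then show ?thesis using A0 B0 by (simp add: ennreal_plus[symmetric] del: ennreal_plus)
    qed
    have I1: "(\<integral>\<^sup>+\<omega>. ennreal (A*(g (X \<omega>))^2) \<partial>M) = ennreal A * ennreal e"
    proof -
      have "(\<integral>\<^sup>+\<omega>. ennreal (A*(g (X \<omega>))^2) \<partial>M) = (\<integral>\<^sup>+\<omega>. ennreal A * ennreal ((g (X \<omega>))^2) \<partial>M)"
        using A0 by (simp add: ennreal_mult)
      also have "\<dots> = ennreal A * (\<integral>\<^sup>+\<omega>. ennreal ((g (X \<omega>))^2) \<partial>M)"
        by (rule nn_integral_cmult) measurable
      also have "(\<integral>\<^sup>+\<omega>. ennreal ((g (X \<omega>))^2) \<partial>M) = ennreal e"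
        unfolding e_def by (rule nn_integral_eq_integral[OF g2_int]) auto
      finally show ?thesis .
    qed
    have I2: "(\<integral>\<^sup>+\<omega>. ennreal (B*((g (X \<omega>))^2*\<bar>eps \<omega>\<bar>^(j+2))) \<partial>M) \<le> ennreal B * (ennreal Mk * ennreal e)"
    proof -
      have "(\<integral>\<^sup>+\<omega>. ennreal (B*((g (X \<omega>))^2*\<bar>eps \<omega>\<bar>^(j+2))) \<partial>M)
          = (\<integral>\<^sup>+\<omega>. ennreal B * (ennreal ((g (X \<omega>))^2) * ennreal (\<bar>eps \<omega>\<bar>^(j+2))) \<partial>M)"
        using B0 by (simp add: ennreal_mult)
      also have "\<dots> = ennreal B * (\<integral>\<^sup>+\<omega>. ennreal ((g (X \<omega>))^2) * ennreal (\<bar>eps \<omega>\<bar>^(j+2)) \<partial>M)"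
        by (rule nn_integral_cmult) measurable
      finally have J1_eq: "(\<integral>\<^sup>+\<omega>. ennreal (B*((g (X \<omega>))^2*\<bar>eps \<omega>\<bar>^(j+2))) \<partial>M) = ennreal B * (\<integral>\<^sup>+\<omega>. ennreal ((g (X \<omega>))^2) * ennreal (\<bar>eps \<omega>\<bar>^(j+2)) \<partial>M)" .
      have J1: "(\<integral>\<^sup>+\<omega>. ennreal ((g (X \<omega>))^2) * ennreal (\<bar>eps \<omega>\<bar>^(j+2)) \<partial>M)
          = (\<integral>\<^sup>+\<omega>. ennreal ((g (X \<omega>))^2) * nn_cond_exp M F (\<lambda>\<omega>. ennreal (\<bar>eps \<omega>\<bar>^(j+2))) \<omega> \<partial>M)"
        by (rule S.nn_cond_exp_intg[symmetric]) measurable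
      also have "\<dots> \<le> (\<integral>\<^sup>+\<omega>. ennreal ((g (X \<omega>))^2) * ennreal Mk \<partial>M)"
      proof (rule nn_integral_mono_AE)
        have "AE \<omega> in M. nn_cond_exp M F (\<lambda>\<omega>. ennreal (\<bar>eps \<omega>\<bar>^(j+2))) \<omega> \<le> ennreal Mk"
          using mom[of "j+2"] unfolding Mk_def by simp
        then show "AE \<omega> in M. ennreal ((g (X \<omega>))^2) * nn_cond_exp M F (\<lambda>\<omega>. ennreal (\<bar>eps \<omega>\<bar>^(j+2))) \<omega> \<le> ennreal ((g (X \<omega>))^2) * ennreal Mk"
          by eventually_elim (rule mult_left_mono, auto)
      qed
      also have "\<dots> = (\<integral>\<^sup>+\<omega>. ennreal ((g (X \<omega>))^2) \<partial>M) * ennreal Mk"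
        by (rule nn_integral_multc) measurable
      also have "(\<integral>\<^sup>+\<omega>. ennreal ((g (X \<omega>))^2) \<partial>M) * ennreal Mk = ennreal e * ennreal Mk"
        unfolding e_def by (subst nn_integral_eq_integral[OF g2_int]) auto
      finally have J: "(\<integral>\<^sup>+\<omega>. ennreal ((g (X \<omega>))^2) * ennreal (\<bar>eps \<omega>\<bar>^(j+2)) \<partial>M) \<le> ennreal e * ennreal Mk" .
      show ?thesis
        unfolding J1_eq using mult_left_mono[OF J, of "ennreal B"] by (simp add: mult.commute[of "ennreal e" "ennreal Mk"])
    qed
    have "(\<integral>\<^sup>+\<omega>. ennreal (\<bar>phi (X \<omega>, Y \<omega>)\<bar>^(j+2)) \<partial>M)
        \<le> (\<integral>\<^sup>+\<omega>. ennreal (A*(g (X \<omega>))^2) + ennreal (B*((g (X \<omega>))^2*\<bar>eps \<omega>\<bar>^(j+2))) \<partial>M)"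
      by (intro nn_integral_mono pw)
    also have "\<dots> = (\<integral>\<^sup>+\<omega>. ennreal (A*(g (X \<omega>))^2) \<partial>M) + (\<integral>\<^sup>+\<omega>. ennreal (B*((g (X \<omega>))^2*\<bar>eps \<omega>\<bar>^(j+2))) \<partial>M)"
      by (rule nn_integral_add) measurable
    also have "\<dots> \<le> ennreal A * ennreal e + ennreal B * (ennreal Mk * ennreal e)"
      unfolding I1 using I2 by (rule add_left_mono)
    also have "\<dots> = ennreal ((A + B*Mk)*e)"
      using A0 B0 Mk0 e_nonneg by (simp add: ennreal_mult[symmetric] ennreal_plus[symmetric] algebra_simps del: ennreal_plus)
    also have "\<dots> \<le> ennreal (e * (fact(j+2) * K * w^j))"
    proof (rule ennreal_leI)
      have "A + B*Mk \<le> fact(j+2) * K * w^j"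
      proof -
        have kk: "fact(j+2) * K * w^j = 8*fact(j+2)*(C^2+\<sigma>^2)*w^j" unfolding K_def by (simp only: mult_ac)
        show ?thesis
          using moment_consts[OF C_ge \<Gamma>_pos, of j \<sigma>] unfolding kk unfolding A_def B_def Mk_def w_def .
      qed
      then show "(A + B*Mk)*e \<le> e * (fact(j+2) * K * w^j)"
        using e_nonneg by (simp add: mult.commute mult_left_mono)
    qed
    finally show ?thesis .
  qed
  have mgf: "(\<integral>\<^sup>+\<omega>. ennreal (exp (u * (phi (X \<omega>, Y \<omega>) - e))) \<partial>M) \<le> ennreal (exp (K * e * u^2 / (1 - \<bar>u\<bar> * w)))"
    if uw: "\<bar>u\<bar> * w < 1" for u
  proof -
    define t where "t = \<bar>u\<bar>"
    define q where "q = t * w"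
    define D0 where "D0 = K * e * t^2 / (1 - q)"
    have t0: "t \<ge> 0" unfolding t_def by simp
    have q1: "q < 1" unfolding q_def t_def using uw .
    have q0: "q \<ge> 0" unfolding q_def using t0 w_pos by simp
    have K0: "K \<ge> 0" unfolding K_def by simp
    have D00: "D0 \<ge> 0" unfolding D0_def using K0 e_nonneg q1 by simp
    define Z where "Z \<omega> = phi (X \<omega>, Y \<omega>)" for \<omega>
    have Z_meas[measurable]: "Z \<in> borel_measurable M" unfolding Z_def by measurable
    define c where "c j = t^(j+2)/fact(j+2)" for j :: nat
    have c0: "c j \<ge> 0" for j unfolding c_def using t0 by simp
    define R where "R \<omega> = (\<Sum>j. \<bar>u * Z \<omega>\<bar>^(j+2)/fact(j+2))" for \<omega>
    have R_meas[measurable]: "R \<in> borel_measurable M" unfolding R_def by measurable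
    have R_nonneg: "R \<omega> \<ge> 0" for \<omega>
      unfolding R_def by (rule suminf_nonneg[OF exp_le_series(1)]) simp
    have cterm: "\<bar>u * Z \<omega>\<bar>^(j+2)/fact(j+2) = c j * \<bar>Z \<omega>\<bar>^(j+2)" for \<omega> j
      unfolding c_def t_def by (simp add: abs_mult power_mult_distrib)
    have R_enn: "ennreal (R \<omega>) = (\<Sum>j. ennreal (c j * \<bar>Z \<omega>\<bar>^(j+2)))" for \<omega>
    proof -
      have "(\<Sum>j. ennreal (\<bar>u * Z \<omega>\<bar>^(j+2)/fact(j+2))) = ennreal (R \<omega>)"
        unfolding R_def by (rule suminf_ennreal2[OF _ exp_le_series(1)]) simp
      then show ?thesis unfolding cterm by simp
    qed
    have IR: "(\<integral>\<^sup>+\<omega>. ennreal (R \<omega>) \<partial>M) \<le> ennreal D0"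
    proof -
      have "(\<integral>\<^sup>+\<omega>. ennreal (R \<omega>) \<partial>M) = (\<Sum>j. \<integral>\<^sup>+\<omega>. ennreal (c j * \<bar>Z \<omega>\<bar>^(j+2)) \<partial>M)"
        unfolding R_enn by (rule nn_integral_suminf) measurable
      also have "\<dots> \<le> (\<Sum>j. ennreal (K * e * t^2 * q^j))"
      proof (rule suminf_le[OF _ summableI summableI])
        fix j
        have "(\<integral>\<^sup>+\<omega>. ennreal (c j * \<bar>Z \<omega>\<bar>^(j+2)) \<partial>M) = ennreal (c j) * (\<integral>\<^sup>+\<omega>. ennreal (\<bar>Z \<omega>\<bar>^(j+2)) \<partial>M)"
          using c0 by (simp add: ennreal_mult nn_integral_cmult)
        also have "\<dots> \<le> ennreal (c j) * ennreal (e * (fact(j+2) * K * w^j))"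
          using Z_mom[of j] unfolding Z_def by (rule mult_left_mono) simp
        also have "\<dots> = ennreal (K * e * t^2 * q^j)"
        proof -
          have ceq: "c j * (e * (fact(j+2) * K * w^j)) = K * e * t^2 * q^j"
          proof -
            have gen: "t^(j+2)/F * (e * (F * K * w^j)) = K * e * t^2 * (t*w)^j" if "F \<noteq> 0" for F :: real
              using that by (simp add: power_add power_mult_distrib field_simps power2_eq_square)
            show ?thesis unfolding c_def q_def by (rule gen) simp
          qed
          have nn: "0 \<le> e * (fact (j+2) * K * w^j)" using e_nonneg K0 w_pos by simp
          show ?thesis by (subst ennreal_mult[symmetric, OF c0 nn]) (simp only: ceq)
        qed
        finally show "(\<integral>\<^sup>+\<omega>. ennreal (c j * \<bar>Z \<omega>\<bar>^(j+2)) \<partial>M) \<le> ennreal (K * e * t^2 * q^j)" .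
      qed
      also have "\<dots> = ennreal (\<Sum>j. K * e * t^2 * q^j)"
        using q0 q1 K0 e_nonneg t0
        by (intro suminf_ennreal2) (auto intro!: summable_mult summable_geometric)
      also have "(\<Sum>j. K * e * t^2 * q^j) = D0"
        using q0 q1 unfolding D0_def by (simp add: suminf_mult suminf_geometric summable_geometric divide_simps)
      finally show ?thesis .
    qed
    have R_int: "integrable M R"
      using IR by (intro integrableI_nonneg) (auto simp: R_nonneg top.not_eq_extremum ennreal_less_top intro: le_less_trans)
    have intR: "(\<integral>\<omega>. R \<omega> \<partial>M) \<le> D0"
      using IR nn_integral_eq_integral[OF R_int] R_nonneg D00 by (simp add: ennreal_le_iff)
    define H where "H \<omega> = exp (-u*e) * (1 + u * Z \<omega> + R \<omega>)" for \<omega>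
    have pw: "exp (u * (Z \<omega> - e)) \<le> H \<omega>" for \<omega>
    proof -
      have "exp (u * (Z \<omega> - e)) = exp (-u*e) * exp (u * Z \<omega>)" by (simp add: exp_add[symmetric] algebra_simps)
      also have "\<dots> \<le> exp (-u*e) * (1 + u * Z \<omega> + R \<omega>)"
        unfolding R_def by (intro mult_left_mono exp_le_series(2)) simp
      finally show ?thesis unfolding H_def .
    qed
    have H_int: "integrable M H" unfolding H_def using Z_int R_int unfolding Z_def by auto
    have H_nonneg: "H \<omega> \<ge> 0" for \<omega> using pw[of \<omega>] by (smt (verit) exp_gt_zero)
    have intH: "(\<integral>\<omega>. H \<omega> \<partial>M) = exp (-u*e) * (1 + u * e + (\<integral>\<omega>. R \<omega> \<partial>M))"
      unfolding H_def using Z_int R_int Z_mean unfolding Z_def by (simp add: P.prob_space)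
    have "(\<integral>\<^sup>+\<omega>. ennreal (exp (u * (phi (X \<omega>, Y \<omega>) - e))) \<partial>M) \<le> (\<integral>\<^sup>+\<omega>. ennreal (H \<omega>) \<partial>M)"
      using pw unfolding Z_def by (intro nn_integral_mono ennreal_leI) auto
    also have "\<dots> = ennreal (\<integral>\<omega>. H \<omega> \<partial>M)"
      using H_int H_nonneg by (intro nn_integral_eq_integral) auto
    also have "\<dots> \<le> ennreal (exp D0)"
    proof (rule ennreal_leI)
      have "(\<integral>\<omega>. H \<omega> \<partial>M) \<le> exp (-u*e) * (1 + (u * e + D0))"
        unfolding intH using intR by (intro mult_left_mono) auto
      also have "\<dots> \<le> exp (-u*e) * exp (u * e + D0)"
        by (intro mult_left_mono exp_ge_add_one_self) simp
      also have "\<dots> = exp D0" by (simp add: exp_add[symmetric])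
      finally show "(\<integral>\<omega>. H \<omega> \<partial>M) \<le> exp D0" .
    qed
    also have "D0 = K * e * u^2 / (1 - \<bar>u\<bar> * w)" unfolding D0_def q_def t_def by simp
    finally show ?thesis .
  qed
  have En_eq: "emp_risk n Xs Ys ft \<omega> - emp_risk n Xs Ys f \<omega> = (1 / real n) * (\<Sum>i<n. phi (Xs i \<omega>, Ys i \<omega>))" for \<omega>
    unfolding emp_risk_def phi_def by (simp add: sum_subtractf right_diff_distrib)
  have main: "(\<integral>\<^sup>+\<omega>. ennreal (exp (s * lam * ((1 / real n) * (\<Sum>i<n. phi (Xs i \<omega>, Ys i \<omega>)) - e))) \<partial>M)
      \<le> ennreal (exp (lam / real n * (K / (1 - w * lam / real n)) * lam * e))"
    if s: "\<bar>s\<bar> = 1" for s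
  proof -
    define u where "u = s * lam / real n"
    have au: "\<bar>u\<bar> = lam / real n" unfolding u_def using s lam(1) n_pos by (simp add: abs_mult)
    have uw: "\<bar>u\<bar> * w < 1" using lamw au by simp
    define D where "D = K * e * u^2 / (1 - \<bar>u\<bar> * w)"
    define h where "h p = ennreal (exp (u * (phi p - e)))" for p
    have h_meas[measurable]: "h \<in> borel_measurable borel" unfolding h_def by measurable
    have pw: "ennreal (exp (s * lam * ((1 / real n) * (\<Sum>i<n. phi (Xs i \<omega>, Ys i \<omega>)) - e)))
        = (\<Prod>i<n. h (Xs i \<omega>, Ys i \<omega>))" for \<omega>
    proof -
      have "s * lam * ((1 / real n) * (\<Sum>i<n. phi (Xs i \<omega>, Ys i \<omega>)) - e)
          = (\<Sum>i<n. u * (phi (Xs i \<omega>, Ys i \<omega>) - e))"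
      proof -
        have a: "(\<Sum>i<n. u * (phi (Xs i \<omega>, Ys i \<omega>) - e)) = u * (\<Sum>i<n. phi (Xs i \<omega>, Ys i \<omega>)) - real n * (u * e)"
          by (simp add: right_diff_distrib sum_subtractf sum_distrib_left)
        show ?thesis unfolding a unfolding u_def using n_pos by (simp add: field_simps)
      qed
      then have "exp (s * lam * ((1 / real n) * (\<Sum>i<n. phi (Xs i \<omega>, Ys i \<omega>)) - e))
          = (\<Prod>i<n. exp (u * (phi (Xs i \<omega>, Ys i \<omega>) - e)))"
        by (simp add: exp_sum)
      then show ?thesis unfolding h_def by (simp add: prod_ennreal)
    qed
    have ind: "P.indep_vars (\<lambda>_. borel) (\<lambda>i \<omega>. h (Xs i \<omega>, Ys i \<omega>)) {..<n}"
      using P.indep_vars_compose2[OF iid_indep, of "\<lambda>_. h" "\<lambda>_. borel"] by simp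
    have meas_i: "(\<lambda>\<omega>. (Xs i \<omega>, Ys i \<omega>)) \<in> M \<rightarrow>\<^sub>M borel" if "i < n" for i
      using iid_indep that unfolding P.indep_vars_def by auto
    have meas_XY: "(\<lambda>\<omega>. (X \<omega>, Y \<omega>)) \<in> M \<rightarrow>\<^sub>M borel"
      by (rule borel_measurable_Pair) (rule XY_rv)+
    have each: "(\<integral>\<^sup>+\<omega>. h (Xs i \<omega>, Ys i \<omega>) \<partial>M) = (\<integral>\<^sup>+\<omega>. h (X \<omega>, Y \<omega>) \<partial>M)" if "i < n" for i
    proof -
      have "(\<integral>\<^sup>+\<omega>. h (Xs i \<omega>, Ys i \<omega>) \<partial>M) = (\<integral>\<^sup>+p. h p \<partial>distr M borel (\<lambda>\<omega>. (Xs i \<omega>, Ys i \<omega>)))"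
        using meas_i[OF that] by (intro nn_integral_distr[symmetric]) auto
      also have "\<dots> = (\<integral>\<^sup>+p. h p \<partial>distr M borel (\<lambda>\<omega>. (X \<omega>, Y \<omega>)))"
        using iid_dist[OF that] by simp
      also have "\<dots> = (\<integral>\<^sup>+\<omega>. h (X \<omega>, Y \<omega>) \<partial>M)"
        using meas_XY by (intro nn_integral_distr) auto
      finally show ?thesis .
    qed
    have hb: "(\<integral>\<^sup>+\<omega>. h (X \<omega>, Y \<omega>) \<partial>M) \<le> ennreal (exp D)"
      unfolding h_def D_def using mgf[OF uw] by simp
    have "(\<integral>\<^sup>+\<omega>. ennreal (exp (s * lam * ((1 / real n) * (\<Sum>i<n. phi (Xs i \<omega>, Ys i \<omega>)) - e))) \<partial>M)
        = (\<integral>\<^sup>+\<omega>. (\<Prod>i<n. h (Xs i \<omega>, Ys i \<omega>)) \<partial>M)"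
      unfolding pw ..
    also have "\<dots> = (\<Prod>i<n. \<integral>\<^sup>+\<omega>. h (Xs i \<omega>, Ys i \<omega>) \<partial>M)"
      by (rule P.indep_vars_nn_integral[OF _ ind]) auto
    also have "\<dots> = (\<Prod>i<n. \<integral>\<^sup>+\<omega>. h (X \<omega>, Y \<omega>) \<partial>M)"
      by (rule prod.cong) (auto simp: each)
    also have "\<dots> \<le> (\<Prod>i<n. ennreal (exp D))"
      by (rule prod_mono_ennreal) (simp add: hb)
    also have "\<dots> = ennreal (exp (real n * D))"
      by (simp add: prod_ennreal exp_of_nat_mult ennreal_power)
    also have "real n * D = lam / real n * (K / (1 - w * lam / real n)) * lam * e"
    proof -
      have u2: "u^2 = (lam / real n)^2" using au by (metis power2_abs)
      have dpos: "lam * w < real n" using lamw n_pos by (simp add: field_simps)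
      have d1: "1 - w * lam / real n \<noteq> 0" using dpos n_pos by (simp add: field_simps)
      have d2: "1 - lam / real n * w \<noteq> 0" using dpos n_pos by (simp add: field_simps)
      have nz: "real n \<noteq> 0" using n_pos by simp
      have "real n * (K * e * (lam / real n)^2 / (1 - lam / real n * w)) = lam / real n * (K / (1 - w * lam / real n)) * lam * e"
        using d1 d2 nz by (simp add: power2_eq_square divide_simps mult_ac)
      then show ?thesis unfolding D_def u2 au .
    qed
    finally show ?thesis .
  qed
  have m1: "(\<integral>\<^sup>+ \<omega>. ennreal (exp (lam * (e - (1 / real n) * (\<Sum>i<n. phi (Xs i \<omega>, Ys i \<omega>))))) \<partial>M)
      \<le> ennreal (exp (lam / real n * (K / (1 - w * lam / real n)) * lam * e))"
  proof -
    have r: "(-1) * lam * (x - e) = lam * (e - x)" for x :: real by (simp add: algebra_simps)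
    have "\<bar>(-1::real)\<bar> = 1" by simp
    from main[OF this] show ?thesis unfolding r .
  qed
  have m2: "(\<integral>\<^sup>+ \<omega>. ennreal (exp (lam * ((1 / real n) * (\<Sum>i<n. phi (Xs i \<omega>, Ys i \<omega>)) - e))) \<partial>M)
      \<le> ennreal (exp (lam / real n * (K / (1 - w * lam / real n)) * lam * e))"
  proof -
    have r: "1 * lam * (x - e) = lam * (x - e)" for x :: real by simp
    have "\<bar>(1::real)\<bar> = 1" by simp
    from main[OF this] show ?thesis unfolding r .
  qed
  show ?thesis
    unfolding Let_def ft_def[symmetric] w_def[symmetric] K_def[symmetric] E_eq En_eq
    by (simp only: max.bounded_iff) (intro conjI m1 m2)
qed

end
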